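(* For every Tychonoff space $X$, the free locally convex space $L(X)$ is DLP (hence also NP and tame).
   Context: The free locally convex space $L(X)$ over a Tychonoff space $X$ is the locally convex space containing $X$ as a (linearly independent, Hamel basis) topological subspace such that every continuous map from $X$ to a locally convex space extends uniquely to a continuous linear map on $L(X)$. A family $F$ of real functions on a set $K$ has DLP if for all sequences $(f_n)\subseteq F$, $(x_m)\subseteq K$, $\lim_n\lim_m f_n(x_m)=\lim_m\lim_n f_n(x_m)$ whenever both exist. A locally convex space $E$ is DLP if for every bounded $B\subseteq E$ and every equicontinuous weak-star compact $M\subseteq E^*$, the family $\{\varphi\mapsto\varphi(b)\}_{b\in B}$ on $M$ has DLP. *)

theory Defs
  imports "HOL-Analysis.Analysis"
begin

definition Tychonoff_space :: "'a topology \<Rightarrow> bool" where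
  "Tychonoff_space X \<longleftrightarrow> completely_regular_space X \<and> Hausdorff_space X"

text \<open>The underlying vector space of L(X): finitely supported real functions on the
  points of X (formal finite linear combinations of points of X), with pointwise
  operations. The point x of X is identified with the Dirac function Ldelta x.\<close>

definition Lcarrier :: "'a topology \<Rightarrow> ('a \<Rightarrow> real) set" where
  "Lcarrier X = {f. finite {x. f x \<noteq> 0} \<and> {x. f x \<noteq> 0} \<subseteq> topspace X}"

definition Ldelta :: "'a \<Rightarrow> 'a \<Rightarrow> real" where
  "Ldelta x = (\<lambda>y. if y = x then 1 else 0)"

definition vadd :: "('a \<Rightarrow> real) \<Rightarrow> ('a \<Rightarrow> real) \<Rightarrow> 'a \<Rightarrow> real" where
  "vadd f g = (\<lambda>y. f y + g y)"

definition vsub :: "('a \<Rightarrow> real) \<Rightarrow> ('a \<Rightarrow> real) \<Rightarrow> 'a \<Rightarrow> real" where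
  "vsub f g = (\<lambda>y. f y - g y)"

definition vscale :: "real \<Rightarrow> ('a \<Rightarrow> real) \<Rightarrow> 'a \<Rightarrow> real" where
  "vscale c f = (\<lambda>y. c * f y)"

definition vzero :: "'a \<Rightarrow> real" where
  "vzero = (\<lambda>y. 0)"

definition seminorm_on :: "('a \<Rightarrow> real) set \<Rightarrow> (('a \<Rightarrow> real) \<Rightarrow> real) \<Rightarrow> bool" where
  "seminorm_on V p \<longleftrightarrow>
     (\<forall>v\<in>V. 0 \<le> p v) \<and>
     (\<forall>c. \<forall>v\<in>V. p (vscale c v) = \<bar>c\<bar> * p v) \<and>
     (\<forall>v\<in>V. \<forall>w\<in>V. p (vadd v w) \<le> p v + p w)"

definition seminorm_topology ::
    "('a \<Rightarrow> real) set \<Rightarrow> (('a \<Rightarrow> real) \<Rightarrow> real) set \<Rightarrow> ('a \<Rightarrow> real) topology" where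
  "seminorm_topology V P = topology (\<lambda>U. U \<subseteq> V \<and>
     (\<forall>v\<in>U. \<exists>F e. finite F \<and> F \<subseteq> P \<and> 0 < e \<and>
        {w\<in>V. \<forall>p\<in>F. p (vsub w v) < e} \<subseteq> U))"

text \<open>The topology of the free locally convex space is the locally convex
  topology generated by all admissible seminorms, i.e. the finest locally convex topology
  making the canonical map continuous (this is the universal property).\<close>

definition admissible_seminorm :: "'a topology \<Rightarrow> (('a \<Rightarrow> real) \<Rightarrow> real) \<Rightarrow> bool" where
  "admissible_seminorm X p \<longleftrightarrow> seminorm_on (Lcarrier X) p \<and>
     (\<forall>x\<in>topspace X. \<forall>e>0. \<exists>U. openin X U \<and> x \<in> U \<and>
        (\<forall>y\<in>U. p (vsub (Ldelta y) (Ldelta x)) < e))"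

definition Ltop :: "'a topology \<Rightarrow> ('a \<Rightarrow> real) topology" where
  "Ltop X = seminorm_topology (Lcarrier X) {p. admissible_seminorm X p}"

definition DLP_family :: "('k \<Rightarrow> real) set \<Rightarrow> 'k set \<Rightarrow> bool" where
  "DLP_family F K \<longleftrightarrow>
     (\<forall>(f :: nat \<Rightarrow> 'k \<Rightarrow> real) (x :: nat \<Rightarrow> 'k) (a :: nat \<Rightarrow> real) A (b :: nat \<Rightarrow> real) B.
        (\<forall>n. f n \<in> F) \<and> (\<forall>m. x m \<in> K) \<and>
        (\<forall>n. (\<lambda>m. f n (x m)) \<longlonglongrightarrow> a n) \<and> a \<longlonglongrightarrow> A \<and>
        (\<forall>m. (\<lambda>n. f n (x m)) \<longlonglongrightarrow> b m) \<and> b \<longlonglongrightarrow> B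
        \<longrightarrow> A = B)"

text \<open>Notions for a locally convex space E whose underlying vector space is V (a linear
  subspace of 'a \<Rightarrow> real with pointwise operations) and whose topology is T.\<close>

definition bounded_in :: "('a \<Rightarrow> real) topology \<Rightarrow> ('a \<Rightarrow> real) set \<Rightarrow> bool" where
  "bounded_in T B \<longleftrightarrow> B \<subseteq> topspace T \<and>
     (\<forall>U. openin T U \<and> vzero \<in> U \<longrightarrow>
        (\<exists>s>0. \<forall>t>s. \<forall>b\<in>B. vscale (1 / t) b \<in> U))"

text \<open>The continuous dual E*; functionals are represented as extensional functions on the
  carrier, so that E* sits inside the product space with the pointwise topology.\<close>
definition cdual :: "('a \<Rightarrow> real) topology \<Rightarrow> (('a \<Rightarrow> real) \<Rightarrow> real) set" where
  "cdual T = {\<phi>. \<phi> \<in> extensional (topspace T) \<and>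
     (\<forall>v\<in>topspace T. \<forall>w\<in>topspace T. \<phi> (vadd v w) = \<phi> v + \<phi> w) \<and>
     (\<forall>c. \<forall>v\<in>topspace T. \<phi> (vscale c v) = c * \<phi> v) \<and>
     continuous_map T euclideanreal \<phi>}"

definition weak_star_top :: "('a \<Rightarrow> real) topology \<Rightarrow> (('a \<Rightarrow> real) \<Rightarrow> real) topology" where
  "weak_star_top T = subtopology (product_topology (\<lambda>_. euclideanreal) (topspace T)) (cdual T)"

definition equicontinuous_on :: "('a \<Rightarrow> real) topology \<Rightarrow> (('a \<Rightarrow> real) \<Rightarrow> real) set \<Rightarrow> bool" where
  "equicontinuous_on T M \<longleftrightarrow>
     (\<forall>v\<in>topspace T. \<forall>e>0. \<exists>U. openin T U \<and> v \<in> U \<and>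
        (\<forall>\<phi>\<in>M. \<forall>w\<in>U. \<bar>\<phi> w - \<phi> v\<bar> < e))"

definition DLP_space :: "('a \<Rightarrow> real) topology \<Rightarrow> bool" where
  "DLP_space T \<longleftrightarrow>
     (\<forall>B M. bounded_in T B \<and> M \<subseteq> cdual T \<and> equicontinuous_on T M \<and>
        compactin (weak_star_top T) M
        \<longrightarrow> DLP_family ((\<lambda>b. \<lambda>\<phi>. \<phi> b) ` B) M)"

end

theory Submission
  imports Defs "HOL-Library.Diagonal_Subsequence"
begin


abbreviation supp :: "('a \<Rightarrow> real) \<Rightarrow> 'a set" where "supp w \<equiv> {y. w y \<noteq> 0}"

lemma Ldelta_in: "x \<in> topspace X \<Longrightarrow> Ldelta x \<in> Lcarrier X"
  by (auto simp: Lcarrier_def Ldelta_def)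

lemma vadd_in: "v \<in> Lcarrier X \<Longrightarrow> w \<in> Lcarrier X \<Longrightarrow> vadd v w \<in> Lcarrier X"
proof -
  assume a: "v \<in> Lcarrier X" "w \<in> Lcarrier X"
  have s: "supp (vadd v w) \<subseteq> supp v \<union> supp w" by (auto simp: vadd_def)
  show ?thesis using a s unfolding Lcarrier_def by (auto intro: finite_subset)
qed

lemma vscale_in: "w \<in> Lcarrier X \<Longrightarrow> vscale c w \<in> Lcarrier X"
proof -
  assume a: "w \<in> Lcarrier X"
  have s: "supp (vscale c w) \<subseteq> supp w" by (auto simp: vscale_def)
  show ?thesis using a s unfolding Lcarrier_def by (auto intro: finite_subset)
qed

lemma vsub_in: "v \<in> Lcarrier X \<Longrightarrow> w \<in> Lcarrier X \<Longrightarrow> vsub v w \<in> Lcarrier X"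
proof -
  assume a: "v \<in> Lcarrier X" "w \<in> Lcarrier X"
  have s: "supp (vsub v w) \<subseteq> supp v \<union> supp w" by (auto simp: vsub_def)
  show ?thesis using a s unfolding Lcarrier_def by (auto intro: finite_subset)
qed

lemma vzero_in: "vzero \<in> Lcarrier X"
  by (auto simp: Lcarrier_def vzero_def)

lemma Lcarrier_finite: "w \<in> Lcarrier X \<Longrightarrow> finite (supp w)"
  by (auto simp: Lcarrier_def)

lemma Lcarrier_supp: "w \<in> Lcarrier X \<Longrightarrow> supp w \<subseteq> topspace X"
  by (auto simp: Lcarrier_def)

lemma vsub_eq: "vsub v w = vadd v (vscale (-1) w)"
  by (auto simp: vsub_def vadd_def vscale_def)

lemma vscale0: "vscale 0 w = vzero" by (auto simp: vscale_def vzero_def)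

lemma seminorm_zero: "seminorm_on V p \<Longrightarrow> w \<in> V \<Longrightarrow> p vzero = 0"
  unfolding seminorm_on_def by (metis abs_zero mult_zero_left vscale0)

lemma seminorm_neg: "seminorm_on V p \<Longrightarrow> w \<in> V \<Longrightarrow> p (vscale (-1) w) = p w"
  unfolding seminorm_on_def by auto

lemma seminorm_vsub_sym:
  assumes "seminorm_on (Lcarrier X) p" "v \<in> Lcarrier X" "w \<in> Lcarrier X"
  shows "p (vsub v w) = p (vsub w v)"
proof -
  have "vsub v w = vscale (-1) (vsub w v)" by (auto simp: vsub_def vscale_def)
  thus ?thesis using assms seminorm_neg vsub_in by metis
qed

lemma seminorm_tri_sub:
  assumes "seminorm_on (Lcarrier X) p" "u \<in> Lcarrier X" "v \<in> Lcarrier X" "w \<in> Lcarrier X"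
  shows "p (vsub u w) \<le> p (vsub u v) + p (vsub v w)"
proof -
  have "vsub u w = vadd (vsub u v) (vsub v w)" by (auto simp: vsub_def vadd_def)
  thus ?thesis using assms vsub_in unfolding seminorm_on_def by metis
qed

lemma seminorm_le_sub:
  assumes "seminorm_on (Lcarrier X) p" "v \<in> Lcarrier X" "w \<in> Lcarrier X"
  shows "p w \<le> p (vsub w v) + p v"
proof -
  have "w = vadd (vsub w v) v" by (auto simp: vsub_def vadd_def)
  thus ?thesis using assms vsub_in unfolding seminorm_on_def by metis
qed

definition snopen :: "('a \<Rightarrow> real) set \<Rightarrow> (('a \<Rightarrow> real) \<Rightarrow> real) set \<Rightarrow> ('a \<Rightarrow> real) set \<Rightarrow> bool" where
  "snopen V P U \<longleftrightarrow> U \<subseteq> V \<and>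
     (\<forall>v\<in>U. \<exists>F e. finite F \<and> F \<subseteq> P \<and> 0 < e \<and>
        {w\<in>V. \<forall>p\<in>F. p (vsub w v) < e} \<subseteq> U)"

lemma snopen_Int: "snopen V P S \<Longrightarrow> snopen V P T \<Longrightarrow> snopen V P (S \<inter> T)"
proof -
  assume S: "snopen V P S" and T: "snopen V P T"
  have "\<exists>F e. finite F \<and> F \<subseteq> P \<and> 0 < e \<and> {w\<in>V. \<forall>p\<in>F. p (vsub w v) < e} \<subseteq> S \<inter> T"
    if v: "v \<in> S \<inter> T" for v
  proof -
    obtain F1 e1 where 1: "finite F1" "F1 \<subseteq> P" "0 < e1" "{w\<in>V. \<forall>p\<in>F1. p (vsub w v) < e1} \<subseteq> S"
      using S v unfolding snopen_def by blast
    obtain F2 e2 where 2: "finite F2" "F2 \<subseteq> P" "0 < e2" "{w\<in>V. \<forall>p\<in>F2. p (vsub w v) < e2} \<subseteq> T"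
      using T v unfolding snopen_def by blast
    have a: "{w\<in>V. \<forall>p\<in>F1 \<union> F2. p (vsub w v) < min e1 e2} \<subseteq> {w\<in>V. \<forall>p\<in>F1. p (vsub w v) < e1}"
    proof (rule subsetI)
      fix w assume "w \<in> {w\<in>V. \<forall>p\<in>F1 \<union> F2. p (vsub w v) < min e1 e2}"
      hence "w \<in> V" "\<And>p. p \<in> F1 \<Longrightarrow> p (vsub w v) < min e1 e2" by auto
      thus "w \<in> {w\<in>V. \<forall>p\<in>F1. p (vsub w v) < e1}" by (simp add: min_less_iff_conj)
    qed
    have b: "{w\<in>V. \<forall>p\<in>F1 \<union> F2. p (vsub w v) < min e1 e2} \<subseteq> {w\<in>V. \<forall>p\<in>F2. p (vsub w v) < e2}"
    proof (rule subsetI)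
      fix w assume "w \<in> {w\<in>V. \<forall>p\<in>F1 \<union> F2. p (vsub w v) < min e1 e2}"
      hence "w \<in> V" "\<And>p. p \<in> F2 \<Longrightarrow> p (vsub w v) < min e1 e2" by auto
      thus "w \<in> {w\<in>V. \<forall>p\<in>F2. p (vsub w v) < e2}" by (simp add: min_less_iff_conj)
    qed
    have "finite (F1 \<union> F2)" "F1 \<union> F2 \<subseteq> P" "0 < min e1 e2" using 1 2 by auto
    moreover have "{w\<in>V. \<forall>p\<in>F1 \<union> F2. p (vsub w v) < min e1 e2} \<subseteq> S \<inter> T"
      using a b 1(4) 2(4) by (meson Int_greatest subset_trans)
    ultimately show ?thesis by (intro exI[of _ "F1 \<union> F2"] exI[of _ "min e1 e2"]) simp
  qed
  moreover have "S \<inter> T \<subseteq> V" using S unfolding snopen_def by (meson inf.coboundedI1)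
  ultimately show ?thesis unfolding snopen_def by (intro conjI ballI) auto
qed

lemma snopen_Union: "(\<And>S. S \<in> K \<Longrightarrow> snopen V P S) \<Longrightarrow> snopen V P (\<Union>K)"
proof -
  assume K: "\<And>S. S \<in> K \<Longrightarrow> snopen V P S"
  have "\<exists>F e. finite F \<and> F \<subseteq> P \<and> 0 < e \<and> {w\<in>V. \<forall>p\<in>F. p (vsub w v) < e} \<subseteq> \<Union>K"
    if vK: "v \<in> \<Union>K" for v
  proof -
    obtain S where S: "S \<in> K" "v \<in> S" using vK by auto
    then obtain F e where "finite F" "F \<subseteq> P" "0 < e" "{w\<in>V. \<forall>p\<in>F. p (vsub w v) < e} \<subseteq> S"
      using K[OF S(1)] unfolding snopen_def by blast
    moreover have "S \<subseteq> \<Union>K" using S(1) by (rule Union_upper)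
    ultimately show ?thesis by (intro exI[of _ F] exI[of _ e]) auto
  qed
  moreover have "\<Union>K \<subseteq> V" using K unfolding snopen_def by (meson Union_least)
  ultimately show ?thesis unfolding snopen_def by (intro conjI ballI) auto
qed

lemma istopology_sn: "istopology (snopen V P)"
  unfolding istopology_def using snopen_Int snopen_Union by blast

lemma seminorm_topology_eq: "seminorm_topology V P = topology (snopen V P)"
  unfolding seminorm_topology_def snopen_def ..

lemma openin_sn:
  fixes V :: "('a \<Rightarrow> real) set" and P :: "(('a \<Rightarrow> real) \<Rightarrow> real) set"
  shows "openin (seminorm_topology V P) U \<longleftrightarrow> U \<subseteq> V \<and>
     (\<forall>v\<in>U. \<exists>F e. finite F \<and> F \<subseteq> P \<and> 0 < e \<and>
        {w\<in>V. \<forall>p\<in>F. p (vsub w v) < e} \<subseteq> U)"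
  unfolding seminorm_topology_eq using istopology_sn[of V P] by (simp add: snopen_def)

lemma topspace_sn: "topspace (seminorm_topology V P) = V"
proof -
  have "openin (seminorm_topology V P) V"
    unfolding openin_sn by (auto intro!: exI[of _ "{}"] exI[of _ 1])
  moreover have "\<And>U. openin (seminorm_topology V P) U \<Longrightarrow> U \<subseteq> V" unfolding openin_sn by auto
  ultimately show ?thesis by (metis openin_subset openin_topspace subset_antisym)
qed

lemma topspace_Ltop: "topspace (Ltop X) = Lcarrier X"
  unfolding Ltop_def by (rule topspace_sn)

lemma ball_open:
  assumes "admissible_seminorm X p" "0 < r"
  shows "openin (Ltop X) {w \<in> Lcarrier X. p w < r}"
  unfolding Ltop_def openin_sn
proof (intro conjI ballI)
  fix v assume v: "v \<in> {w \<in> Lcarrier X. p w < r}"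
  have sn: "seminorm_on (Lcarrier X) p" using assms admissible_seminorm_def by blast
  show "\<exists>F e. finite F \<and> F \<subseteq> {p. admissible_seminorm X p} \<and> 0 < e \<and>
        {w \<in> Lcarrier X. \<forall>p\<in>F. p (vsub w v) < e} \<subseteq> {w \<in> Lcarrier X. p w < r}"
    apply (rule exI[of _ "{p}"], rule exI[of _ "r - p v"])
    using v assms sn seminorm_le_sub[OF sn] by fastforce
qed auto




lemma bounded_sn:
  assumes "bounded_in (Ltop X) B" "admissible_seminorm X p"
  shows "\<exists>R. \<forall>b\<in>B. p b \<le> R"
proof -
  have sn: "seminorm_on (Lcarrier X) p" using assms(2) admissible_seminorm_def by blast
  let ?U = "{w \<in> Lcarrier X. p w < 1}"
  have o: "openin (Ltop X) ?U" using ball_open[OF assms(2)] by simp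
  have z: "vzero \<in> ?U" using seminorm_zero[OF sn vzero_in] vzero_in by simp
  obtain s where s: "s > 0" "\<forall>t>s. \<forall>b\<in>B. vscale (1 / t) b \<in> ?U"
    using assms(1) o z unfolding bounded_in_def by blast
  have BV: "B \<subseteq> Lcarrier X" using assms(1) unfolding bounded_in_def topspace_Ltop by blast
  have "p b \<le> s + 1" if b: "b \<in> B" for b
  proof -
    have "p (vscale (1 / (s+1)) b) < 1" using s b by auto
    moreover have "p (vscale (1 / (s+1)) b) = p b / (s+1)"
      using sn b BV s(1) unfolding seminorm_on_def by auto
    ultimately have "p b / (s+1) < 1" by simp
    thus ?thesis using s(1) by (simp add: divide_less_eq)
  qed
  thus ?thesis by blast
qed

lemma admissible_zero: "admissible_seminorm X (\<lambda>w. 0)"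
  unfolding admissible_seminorm_def seminorm_on_def
  by (metis abs_ge_zero add_0 less_eq_real_def mult_zero_right openin_topspace)

lemma admissible_add:
  assumes "admissible_seminorm X p1" "admissible_seminorm X p2"
  shows "admissible_seminorm X (\<lambda>w. p1 w + p2 w)"
proof -
  have s1: "seminorm_on (Lcarrier X) p1" and s2: "seminorm_on (Lcarrier X) p2"
    using assms admissible_seminorm_def by blast+
  have "seminorm_on (Lcarrier X) (\<lambda>w. p1 w + p2 w)"
    unfolding seminorm_on_def
  proof (intro conjI ballI allI)
    fix v assume v: "v \<in> Lcarrier X"
    show "0 \<le> p1 v + p2 v" using s1 s2 v unfolding seminorm_on_def by (meson add_nonneg_nonneg)
    fix c show "p1 (vscale c v) + p2 (vscale c v) = \<bar>c\<bar> * (p1 v + p2 v)"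
      using s1 s2 v unfolding seminorm_on_def by (simp add: distrib_left)
  next
    fix v w assume v: "v \<in> Lcarrier X" and w: "w \<in> Lcarrier X"
    have "p1 (vadd v w) \<le> p1 v + p1 w" "p2 (vadd v w) \<le> p2 v + p2 w"
      using s1 s2 v w unfolding seminorm_on_def by blast+
    thus "p1 (vadd v w) + p2 (vadd v w) \<le> p1 v + p2 v + (p1 w + p2 w)" by linarith
  qed
  moreover have "\<exists>U. openin X U \<and> x \<in> U \<and> (\<forall>y\<in>U. p1 (vsub (Ldelta y) (Ldelta x)) + p2 (vsub (Ldelta y) (Ldelta x)) < e)"
    if x: "x \<in> topspace X" and e: "e > 0" for x e
  proof -
    obtain U1 where U1: "openin X U1" "x \<in> U1" "\<forall>y\<in>U1. p1 (vsub (Ldelta y) (Ldelta x)) < e/2"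
      using assms(1) x e unfolding admissible_seminorm_def by (meson half_gt_zero)
    obtain U2 where U2: "openin X U2" "x \<in> U2" "\<forall>y\<in>U2. p2 (vsub (Ldelta y) (Ldelta x)) < e/2"
      using assms(2) x e unfolding admissible_seminorm_def by (meson half_gt_zero)
    show ?thesis
      apply (rule exI[of _ "U1 \<inter> U2"])
      using U1 U2 by (auto intro: openin_Int) (smt (verit))
  qed
  ultimately show ?thesis unfolding admissible_seminorm_def by blast
qed

lemma admissible_scale:
  assumes "admissible_seminorm X p" "c \<ge> 0"
  shows "admissible_seminorm X (\<lambda>w. c * p w)"
proof -
  have s: "seminorm_on (Lcarrier X) p" using assms admissible_seminorm_def by blast
  have "seminorm_on (Lcarrier X) (\<lambda>w. c * p w)"
    unfolding seminorm_on_def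
  proof (intro conjI ballI allI)
    fix v assume v: "v \<in> Lcarrier X"
    have "0 \<le> p v" using s v unfolding seminorm_on_def by blast
    thus "0 \<le> c * p v" using assms(2) by (rule mult_nonneg_nonneg[rotated])
    fix d have "p (vscale d v) = \<bar>d\<bar> * p v" using s v unfolding seminorm_on_def by blast
    thus "c * p (vscale d v) = \<bar>d\<bar> * (c * p v)" by (simp only: mult.left_commute)
  next
    fix v w assume v: "v \<in> Lcarrier X" and w: "w \<in> Lcarrier X"
    have "p (vadd v w) \<le> p v + p w" using s v w unfolding seminorm_on_def by blast
    hence "c * p (vadd v w) \<le> c * (p v + p w)" using assms(2) by (rule mult_left_mono)
    thus "c * p (vadd v w) \<le> c * p v + c * p w" by (simp add: distrib_left)
  qed
  moreover have "\<exists>U. openin X U \<and> x \<in> U \<and> (\<forall>y\<in>U. c * p (vsub (Ldelta y) (Ldelta x)) < e)"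
    if x: "x \<in> topspace X" and e: "e > 0" for x e
  proof -
    have "e / (c+1) > 0" using e assms(2) by simp
    then obtain U where U: "openin X U" "x \<in> U" "\<forall>y\<in>U. p (vsub (Ldelta y) (Ldelta x)) < e/(c+1)"
      using assms(1) x unfolding admissible_seminorm_def by meson
    have "c * p (vsub (Ldelta y) (Ldelta x)) < e" if y: "y \<in> U" for y
    proof -
      have yX: "y \<in> topspace X" using U(1) y openin_subset by blast
      have "c * p (vsub (Ldelta y) (Ldelta x)) \<le> c * (e/(c+1))"
        using U(3) y assms(2) by (meson less_imp_le mult_left_mono)
      also have "\<dots> = e * (c / (c+1))" by simp
      also have "\<dots> < e * 1" using e assms(2) by (intro mult_strict_left_mono) auto
      also have "\<dots> = e" by simp
      finally show ?thesis .
    qed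
    thus ?thesis using U by blast
  qed
  ultimately show ?thesis unfolding admissible_seminorm_def by blast
qed

lemma admissible_sum:
  assumes "finite F" "\<forall>p\<in>F. admissible_seminorm X p"
  shows "admissible_seminorm X (\<lambda>w. \<Sum>p\<in>F. p w)"
  using assms
proof (induction F rule: finite_induct)
  case empty thus ?case using admissible_zero by simp
next
  case (insert p F)
  have "admissible_seminorm X (\<lambda>w. p w + (\<Sum>p\<in>F. p w))"
    using admissible_add[OF _ insert.IH] insert.prems by simp
  thus ?case using insert by simp
qed

lemma cdual_lin:
  assumes "\<phi> \<in> cdual (Ltop X)"
  shows "\<And>v w. v \<in> Lcarrier X \<Longrightarrow> w \<in> Lcarrier X \<Longrightarrow> \<phi> (vadd v w) = \<phi> v + \<phi> w"
    and "\<And>c v. v \<in> Lcarrier X \<Longrightarrow> \<phi> (vscale c v) = c * \<phi> v"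
proof -
  have "\<forall>v\<in>Lcarrier X. \<forall>w\<in>Lcarrier X. \<phi> (vadd v w) = \<phi> v + \<phi> w"
     "\<forall>c. \<forall>v\<in>Lcarrier X. \<phi> (vscale c v) = c * \<phi> v"
    using assms unfolding cdual_def topspace_Ltop mem_Collect_eq by simp_all
  thus "\<And>v w. v \<in> Lcarrier X \<Longrightarrow> w \<in> Lcarrier X \<Longrightarrow> \<phi> (vadd v w) = \<phi> v + \<phi> w"
    and "\<And>c v. v \<in> Lcarrier X \<Longrightarrow> \<phi> (vscale c v) = c * \<phi> v" by blast+
qed

lemma cdual_zero:
  assumes "\<phi> \<in> cdual (Ltop X)" shows "\<phi> vzero = 0"
  using cdual_lin(2)[OF assms vzero_in, of 0] by (simp add: vscale0)

lemma equicont_dom: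
  assumes M: "M \<subseteq> cdual (Ltop X)" and eq: "equicontinuous_on (Ltop X) M"
  shows "\<exists>q. admissible_seminorm X q \<and> (\<forall>\<phi>\<in>M. \<forall>w\<in>Lcarrier X. \<bar>\<phi> w\<bar> \<le> q w)"
proof -
  obtain U where U: "openin (Ltop X) U" "vzero \<in> U" "\<forall>\<phi>\<in>M. \<forall>w\<in>U. \<bar>\<phi> w - \<phi> vzero\<bar> < 1"
    using eq vzero_in[of X] unfolding equicontinuous_on_def topspace_Ltop
    by (meson zero_less_one)
  have U': "\<forall>\<phi>\<in>M. \<forall>w\<in>U. \<bar>\<phi> w\<bar> < 1" using U(3) M cdual_zero by fastforce
  obtain F e where Fe: "finite F" "F \<subseteq> {p. admissible_seminorm X p}" "0 < e"
      "{w\<in>Lcarrier X. \<forall>p\<in>F. p (vsub w vzero) < e} \<subseteq> U"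
    using U(1,2) unfolding Ltop_def openin_sn by blast
  have vz: "\<And>w. vsub w vzero = w" by (auto simp: vsub_def vzero_def)
  have ball: "w \<in> U" if "w \<in> Lcarrier X" "\<forall>p\<in>F. p w < e" for w
  proof -
    have "w \<in> {w\<in>Lcarrier X. \<forall>p\<in>F. p (vsub w vzero) < e}" using that by (simp add: vz)
    thus ?thesis using Fe(4) by blast
  qed
  define q0 where "q0 = (\<lambda>w. \<Sum>p\<in>F. p w)"
  have aq0: "admissible_seminorm X q0" unfolding q0_def using admissible_sum Fe by blast
  have snF: "\<And>p. p \<in> F \<Longrightarrow> seminorm_on (Lcarrier X) p" using Fe(2) admissible_seminorm_def by blast
  have pq0: "\<And>p w. p \<in> F \<Longrightarrow> w \<in> Lcarrier X \<Longrightarrow> p w \<le> q0 w"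
    unfolding q0_def using Fe(1) by (intro member_le_sum) (auto dest: snF simp: seminorm_on_def)
  have pnn: "\<And>p w. p \<in> F \<Longrightarrow> w \<in> Lcarrier X \<Longrightarrow> 0 \<le> p w" using snF seminorm_on_def by blast
  have psc: "\<And>p w c. p \<in> F \<Longrightarrow> w \<in> Lcarrier X \<Longrightarrow> p (vscale c w) = \<bar>c\<bar> * p w" using snF seminorm_on_def by blast
  have main: "\<bar>\<phi> w\<bar> \<le> (2/e) * q0 w" if phi: "\<phi> \<in> M" and w: "w \<in> Lcarrier X" for \<phi> w
  proof (cases "q0 w = 0")
    case True
    have p0: "p w = 0" if "p \<in> F" for p using pq0[OF that w] pnn[OF that w] True by linarith
    show ?thesis
    proof (rule ccontr)
      assume "\<not> ?thesis"
      hence nz: "\<phi> w \<noteq> 0" using True by simp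
      define t where "t = 1 / \<bar>\<phi> w\<bar>"
      have "\<forall>p\<in>F. p (vscale t w) < e"
      proof
        fix p assume pF: "p \<in> F"
        show "p (vscale t w) < e" using psc[OF pF w, of t] p0[OF pF] Fe(3) by simp
      qed
      hence tin: "vscale t w \<in> U" using ball[OF vscale_in[OF w]] by blast
      have "\<phi> (vscale t w) = t * \<phi> w" using cdual_lin(2)[of \<phi> X w t] M phi w by auto
      hence "\<bar>\<phi> (vscale t w)\<bar> = 1" using nz unfolding t_def by (simp add: abs_mult)
      thus False using U' phi tin by fastforce
    qed
  next
    case False
    have "0 \<le> q0 w" using aq0 w unfolding admissible_seminorm_def seminorm_on_def by blast
    hence q0pos: "q0 w > 0" using False by linarith
    define s where "s = e / (2 * q0 w)"
    have s0: "s > 0" using q0pos Fe(3) s_def by simp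
    have "\<forall>p\<in>F. p (vscale s w) < e"
    proof
      fix p assume p: "p \<in> F"
      have "p (vscale s w) = s * p w" using psc[OF p w] s0 by simp
      also have "\<dots> \<le> s * q0 w" using pq0[OF p w] s0 by (simp add: mult_left_mono)
      also have "\<dots> = e/2" using q0pos unfolding s_def by simp
      also have "\<dots> < e" using Fe(3) by simp
      finally show "p (vscale s w) < e" .
    qed
    hence "vscale s w \<in> U" using ball vscale_in w by blast
    hence "\<bar>\<phi> (vscale s w)\<bar> < 1" using U' phi by blast
    moreover have "\<phi> (vscale s w) = s * \<phi> w" using cdual_lin(2)[of \<phi> X w s] M phi w by auto
    ultimately have "s * \<bar>\<phi> w\<bar> < 1" using s0 by (simp add: abs_mult)
    hence "\<bar>\<phi> w\<bar> < 1 / s" using s0 by (simp add: field_simps)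
    also have "1 / s = (2/e) * q0 w" unfolding s_def using Fe(3) q0pos by simp
    finally show ?thesis by simp
  qed
  have "admissible_seminorm X (\<lambda>w. (2/e) * q0 w)" using admissible_scale[OF aq0, of "2/e"] Fe(3) by simp
  thus ?thesis using main by blast
qed




definition ip :: "('a \<Rightarrow> real) \<Rightarrow> ('a \<Rightarrow> real) \<Rightarrow> real" where
  "ip v w = (\<Sum>y\<in>supp w. w y * v y)"

lemma ip_superset: "finite T \<Longrightarrow> supp w \<subseteq> T \<Longrightarrow> ip v w = (\<Sum>y\<in>T. w y * v y)"
  unfolding ip_def by (rule sum.mono_neutral_left) auto

lemma ip_add:
  assumes "w1 \<in> Lcarrier X" "w2 \<in> Lcarrier X"
  shows "ip v (vadd w1 w2) = ip v w1 + ip v w2"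
proof -
  let ?T = "supp w1 \<union> supp w2"
  have f: "finite ?T" using assms Lcarrier_finite by blast
  have "ip v (vadd w1 w2) = (\<Sum>y\<in>?T. vadd w1 w2 y * v y)"
    by (rule ip_superset[OF f]) (auto simp: vadd_def)
  also have "\<dots> = (\<Sum>y\<in>?T. w1 y * v y) + (\<Sum>y\<in>?T. w2 y * v y)"
    by (simp add: vadd_def distrib_right sum.distrib)
  also have "\<dots> = ip v w1 + ip v w2"
    using ip_superset[OF f, of w1 v] ip_superset[OF f, of w2 v] by auto
  finally show ?thesis .
qed

lemma ip_scale:
  assumes "w \<in> Lcarrier X"
  shows "ip v (vscale c w) = c * ip v w"
proof -
  have f: "finite (supp w)" using assms Lcarrier_finite by blast
  have "ip v (vscale c w) = (\<Sum>y\<in>supp w. vscale c w y * v y)"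
    by (rule ip_superset[OF f]) (auto simp: vscale_def)
  also have "\<dots> = c * ip v w" by (simp add: vscale_def ip_def sum_distrib_left mult.assoc)
  finally show ?thesis .
qed

lemma ip_delta_diff: "ip v (vsub (Ldelta y) (Ldelta x)) = v y - v x"
proof -
  have f: "finite {x, y}" by simp
  have s: "supp (vsub (Ldelta y) (Ldelta x)) \<subseteq> {x, y}" by (auto simp: vsub_def Ldelta_def)
  show ?thesis
  proof (cases "x = y")
    case True thus ?thesis using ip_superset[OF f s, of v] by (simp add: vsub_def Ldelta_def)
  next
    case False thus ?thesis using ip_superset[OF f s, of v] by (simp add: vsub_def Ldelta_def)
  qed
qed

lemma ip_diff_fun: "ip (\<lambda>y. g y - h y) w = ip g w - ip h w"
  unfolding ip_def by (simp add: right_diff_distrib sum_subtractf)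

lemma ip_mult_fun: "ip (\<lambda>y. c * g y) w = c * ip g w"
  unfolding ip_def by (simp add: sum_distrib_left mult.left_commute)

lemma ip_cong: "(\<And>y. w y \<noteq> 0 \<Longrightarrow> g y = h y) \<Longrightarrow> ip g w = ip h w"
  unfolding ip_def by (rule sum.cong) auto

lemma ip_abs_le: "\<bar>ip v w\<bar> \<le> (\<Sum>y\<in>supp w. \<bar>w y\<bar> * \<bar>v y\<bar>)"
  unfolding ip_def by (rule order_trans[OF sum_abs]) (simp add: abs_mult)

lemma lin_repr_aux:
  assumes add: "\<forall>v\<in>Lcarrier X. \<forall>w\<in>Lcarrier X. \<phi> (vadd v w) = \<phi> v + \<phi> w"
    and sc: "\<forall>c. \<forall>v\<in>Lcarrier X. \<phi> (vscale c v) = c * \<phi> v"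
    and T: "finite T"
  shows "\<forall>w\<in>Lcarrier X. supp w \<subseteq> T \<longrightarrow> \<phi> w = (\<Sum>y\<in>T. w y * \<phi> (Ldelta y))"
  using T
proof (induction T rule: finite_induct)
  case empty
  have z: "\<phi> vzero = 0" using sc vzero_in[of X] vscale0[of vzero] by (metis mult_zero_left)
  show ?case
  proof (intro ballI impI)
    fix w assume "w \<in> Lcarrier X" "supp w \<subseteq> {}"
    hence "w = vzero" by (auto simp: vzero_def)
    thus "\<phi> w = (\<Sum>y\<in>{}. w y * \<phi> (Ldelta y))" using z by simp
  qed
next
  case (insert a T)
  show ?case
  proof (intro ballI impI)
    fix w assume w: "w \<in> Lcarrier X" and sw: "supp w \<subseteq> insert a T"
    define w' where "w' = w(a := 0)"
    have w'V: "w' \<in> Lcarrier X" using w unfolding w'_def Lcarrier_def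
      by (auto intro: finite_subset[of _ "supp w"])
    have sw': "supp w' \<subseteq> T" using sw unfolding w'_def by auto
    have IH: "\<phi> w' = (\<Sum>y\<in>T. w' y * \<phi> (Ldelta y))" using insert.IH w'V sw' by blast
    have eqT: "(\<Sum>y\<in>T. w' y * \<phi> (Ldelta y)) = (\<Sum>y\<in>T. w y * \<phi> (Ldelta y))"
      using insert.hyps(2) unfolding w'_def by (intro sum.cong) auto
    show "\<phi> w = (\<Sum>y\<in>insert a T. w y * \<phi> (Ldelta y))"
    proof (cases "w a = 0")
      case True
      hence "w' = w" unfolding w'_def by auto
      thus ?thesis using IH eqT True insert.hyps by simp
    next
      case False
      hence aX: "a \<in> topspace X" using w Lcarrier_supp by blast
      have dV: "vscale (w a) (Ldelta a) \<in> Lcarrier X" using vscale_in Ldelta_in aX by metis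
      have "w = vadd (vscale (w a) (Ldelta a)) w'"
        unfolding w'_def by (auto simp: vadd_def vscale_def Ldelta_def)
      hence "\<phi> w = \<phi> (vscale (w a) (Ldelta a)) + \<phi> w'" using add dV w'V by metis
      also have "\<dots> = w a * \<phi> (Ldelta a) + \<phi> w'" using sc Ldelta_in[OF aX] by metis
      finally show ?thesis using IH eqT insert.hyps by simp
    qed
  qed
qed

lemma lin_repr:
  assumes add: "\<forall>v\<in>Lcarrier X. \<forall>w\<in>Lcarrier X. \<phi> (vadd v w) = \<phi> v + \<phi> w"
    and sc: "\<forall>c. \<forall>v\<in>Lcarrier X. \<phi> (vscale c v) = c * \<phi> v"
    and w: "w \<in> Lcarrier X"
  shows "\<phi> w = ip (\<lambda>y. \<phi> (Ldelta y)) w"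
  using lin_repr_aux[OF add sc Lcarrier_finite[OF w]] w unfolding ip_def by blast

section \<open>Sup seminorms\<close>

definition supsn :: "('a \<Rightarrow> real) set \<Rightarrow> ('a \<Rightarrow> real) \<Rightarrow> real" where
  "supsn VV w = (SUP v\<in>VV. \<bar>ip v w\<bar>)"

locale supfam =
  fixes X :: "'a topology" and VV :: "('a \<Rightarrow> real) set" and C :: "'a \<Rightarrow> real"
  assumes ne: "VV \<noteq> {}"
    and bnd: "\<And>x v. x \<in> topspace X \<Longrightarrow> v \<in> VV \<Longrightarrow> \<bar>v x\<bar> \<le> C x"
begin

lemma bdd: "w \<in> Lcarrier X \<Longrightarrow> bdd_above ((\<lambda>v. \<bar>ip v w\<bar>) ` VV)"
proof -
  assume w: "w \<in> Lcarrier X"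
  have "\<bar>ip v w\<bar> \<le> (\<Sum>y\<in>supp w. \<bar>w y\<bar> * C y)" if v: "v \<in> VV" for v
  proof -
    have "\<bar>ip v w\<bar> \<le> (\<Sum>y\<in>supp w. \<bar>w y\<bar> * \<bar>v y\<bar>)" by (rule ip_abs_le)
    also have "\<dots> \<le> (\<Sum>y\<in>supp w. \<bar>w y\<bar> * C y)"
    proof (rule sum_mono)
      fix y assume "y \<in> supp w"
      hence "y \<in> topspace X" using w Lcarrier_supp by blast
      thus "\<bar>w y\<bar> * \<bar>v y\<bar> \<le> \<bar>w y\<bar> * C y" using bnd v by (simp add: mult_left_mono)
    qed
    finally show ?thesis .
  qed
  thus ?thesis by (intro bdd_aboveI2) blast
qed

lemma upper: "w \<in> Lcarrier X \<Longrightarrow> v \<in> VV \<Longrightarrow> \<bar>ip v w\<bar> \<le> supsn VV w"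
  unfolding supsn_def using bdd by (intro cSUP_upper) auto

lemma least: "(\<And>v. v \<in> VV \<Longrightarrow> \<bar>ip v w\<bar> \<le> r) \<Longrightarrow> supsn VV w \<le> r"
  unfolding supsn_def using ne by (intro cSUP_least) auto

lemma nonneg: "w \<in> Lcarrier X \<Longrightarrow> 0 \<le> supsn VV w"
proof -
  assume w: "w \<in> Lcarrier X"
  obtain v where "v \<in> VV" using ne by blast
  thus ?thesis using upper[OF w] by (meson abs_ge_zero order_trans)
qed

lemma seminorm: "seminorm_on (Lcarrier X) (supsn VV)"
  unfolding seminorm_on_def
proof (intro conjI ballI allI)
  fix w assume w: "w \<in> Lcarrier X"
  show "0 \<le> supsn VV w" using nonneg[OF w] .
  fix c
  have sc: "\<bar>ip v (vscale c w)\<bar> = \<bar>c\<bar> * \<bar>ip v w\<bar>" for v using ip_scale[OF w] by (simp add: abs_mult)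
  have le: "supsn VV (vscale c w) \<le> \<bar>c\<bar> * supsn VV w"
    by (rule least) (simp add: sc mult_left_mono upper[OF w])
  show "supsn VV (vscale c w) = \<bar>c\<bar> * supsn VV w"
  proof (cases "c = 0")
    case True
    thus ?thesis using le nonneg[OF vscale_in[OF w], of c] by simp
  next
    case False
    have "supsn VV w \<le> supsn VV (vscale c w) / \<bar>c\<bar>"
    proof (rule least)
      fix v assume v: "v \<in> VV"
      have "\<bar>c\<bar> * \<bar>ip v w\<bar> \<le> supsn VV (vscale c w)" using upper[OF vscale_in[OF w] v, of c] sc[of v] by simp
      thus "\<bar>ip v w\<bar> \<le> supsn VV (vscale c w) / \<bar>c\<bar>" using False by (simp add: field_simps)
    qed
    hence "\<bar>c\<bar> * supsn VV w \<le> supsn VV (vscale c w)" using False by (simp add: field_simps)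
    thus ?thesis using le by simp
  qed
next
  fix v w assume v: "v \<in> Lcarrier X" and w: "w \<in> Lcarrier X"
  show "supsn VV (vadd v w) \<le> supsn VV v + supsn VV w"
  proof (rule least)
    fix u assume u: "u \<in> VV"
    have "\<bar>ip u (vadd v w)\<bar> \<le> \<bar>ip u v\<bar> + \<bar>ip u w\<bar>" using ip_add[OF v w] by simp
    thus "\<bar>ip u (vadd v w)\<bar> \<le> supsn VV v + supsn VV w" using upper[OF v u] upper[OF w u] by linarith
  qed
qed

lemma admissible:
  assumes eq: "\<And>x e. x \<in> topspace X \<Longrightarrow> e > 0 \<Longrightarrow>
     \<exists>U. openin X U \<and> x \<in> U \<and> (\<forall>y\<in>U. \<forall>v\<in>VV. \<bar>v y - v x\<bar> \<le> e)"
  shows "admissible_seminorm X (supsn VV)"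
  unfolding admissible_seminorm_def
proof (intro conjI seminorm ballI allI impI)
  fix x e assume x: "x \<in> topspace X" and e: "(e::real) > 0"
  obtain U where U: "openin X U" "x \<in> U" "\<forall>y\<in>U. \<forall>v\<in>VV. \<bar>v y - v x\<bar> \<le> e/2"
    using eq[OF x, of "e/2"] e by auto
  have "supsn VV (vsub (Ldelta y) (Ldelta x)) < e" if y: "y \<in> U" for y
  proof -
    have "supsn VV (vsub (Ldelta y) (Ldelta x)) \<le> e/2"
      by (rule least) (use U(3) y in \<open>simp add: ip_delta_diff\<close>)
    thus ?thesis using e by simp
  qed
  thus "\<exists>U. openin X U \<and> x \<in> U \<and> (\<forall>y\<in>U. supsn VV (vsub (Ldelta y) (Ldelta x)) < e)"
    using U by blast
qed

end




locale core =
  fixes X :: "'a topology" and q :: "('a \<Rightarrow> real) \<Rightarrow> real"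
    and \<phi> :: "nat \<Rightarrow> ('a \<Rightarrow> real) \<Rightarrow> real" and b :: "nat \<Rightarrow> 'a \<Rightarrow> real"
  assumes q_adm: "admissible_seminorm X q"
    and lin_add: "\<And>m v w. v \<in> Lcarrier X \<Longrightarrow> w \<in> Lcarrier X \<Longrightarrow> \<phi> m (vadd v w) = \<phi> m v + \<phi> m w"
    and lin_sc: "\<And>m c v. v \<in> Lcarrier X \<Longrightarrow> \<phi> m (vscale c v) = c * \<phi> m v"
    and dom: "\<And>m w. w \<in> Lcarrier X \<Longrightarrow> \<bar>\<phi> m w\<bar> \<le> q w"
    and bV: "\<And>n. b n \<in> Lcarrier X"
    and Hb: "\<And>p. admissible_seminorm X p \<Longrightarrow> \<exists>R. \<forall>n. p (b n) \<le> R"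
begin

definition f :: "nat \<Rightarrow> 'a \<Rightarrow> real" where "f m x = \<phi> m (Ldelta x)"
definition D :: "'a \<Rightarrow> 'a \<Rightarrow> real" where "D x y = q (vsub (Ldelta y) (Ldelta x))"

lemma q_sn: "seminorm_on (Lcarrier X) q" using q_adm admissible_seminorm_def by blast

lemma D_nonneg: "x \<in> topspace X \<Longrightarrow> y \<in> topspace X \<Longrightarrow> 0 \<le> D x y"
proof -
  assume x: "x \<in> topspace X" and y: "y \<in> topspace X"
  have "vsub (Ldelta y) (Ldelta x) \<in> Lcarrier X" by (rule vsub_in[OF Ldelta_in[OF y] Ldelta_in[OF x]])
  thus ?thesis unfolding D_def using q_sn unfolding seminorm_on_def by blast
qed

lemma D_refl: "D x x = 0"
proof -
  have "vsub (Ldelta x) (Ldelta x) = vzero" by (auto simp: vsub_def vzero_def)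
  thus ?thesis unfolding D_def using seminorm_zero[OF q_sn vzero_in] by simp
qed

lemma D_sym: "x \<in> topspace X \<Longrightarrow> y \<in> topspace X \<Longrightarrow> D x y = D y x"
  unfolding D_def by (rule seminorm_vsub_sym[OF q_sn Ldelta_in Ldelta_in])

lemma D_tri: "x \<in> topspace X \<Longrightarrow> y \<in> topspace X \<Longrightarrow> z \<in> topspace X \<Longrightarrow> D x z \<le> D x y + D y z"
proof -
  assume x: "x \<in> topspace X" and y: "y \<in> topspace X" and z: "z \<in> topspace X"
  have "q (vsub (Ldelta z) (Ldelta x)) \<le> q (vsub (Ldelta z) (Ldelta y)) + q (vsub (Ldelta y) (Ldelta x))"
    by (rule seminorm_tri_sub[OF q_sn Ldelta_in[OF z] Ldelta_in[OF y] Ldelta_in[OF x]])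
  thus ?thesis unfolding D_def by simp
qed

lemma D_near: "x \<in> topspace X \<Longrightarrow> e > 0 \<Longrightarrow> \<exists>U. openin X U \<and> x \<in> U \<and> (\<forall>y\<in>U. D x y < e)"
  using q_adm unfolding admissible_seminorm_def D_def by blast

lemma phi_sub: "v \<in> Lcarrier X \<Longrightarrow> w \<in> Lcarrier X \<Longrightarrow> \<phi> m (vsub v w) = \<phi> m v - \<phi> m w"
  using lin_add[OF _ vscale_in, of v w m "-1"] lin_sc[of w m "-1"] by (simp add: vsub_eq)

lemma f_lip: "x \<in> topspace X \<Longrightarrow> y \<in> topspace X \<Longrightarrow> \<bar>f m y - f m x\<bar> \<le> D x y"
proof -
  assume x: "x \<in> topspace X" and y: "y \<in> topspace X"
  have "\<phi> m (vsub (Ldelta y) (Ldelta x)) = \<phi> m (Ldelta y) - \<phi> m (Ldelta x)"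
    by (rule phi_sub[OF Ldelta_in[OF y] Ldelta_in[OF x]])
  moreover have "\<bar>\<phi> m (vsub (Ldelta y) (Ldelta x))\<bar> \<le> q (vsub (Ldelta y) (Ldelta x))"
    by (rule dom[OF vsub_in[OF Ldelta_in[OF y] Ldelta_in[OF x]]])
  ultimately show ?thesis unfolding f_def D_def by simp
qed

lemma f_bnd: "x \<in> topspace X \<Longrightarrow> \<bar>f m x\<bar> \<le> q (Ldelta x)"
  unfolding f_def using dom[OF Ldelta_in] by blast

lemma phi_ip: "w \<in> Lcarrier X \<Longrightarrow> \<phi> m w = ip (f m) w"
proof -
  assume w: "w \<in> Lcarrier X"
  have a: "\<forall>v\<in>Lcarrier X. \<forall>w\<in>Lcarrier X. \<phi> m (vadd v w) = \<phi> m v + \<phi> m w" using lin_add by blast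
  have c: "\<forall>c. \<forall>v\<in>Lcarrier X. \<phi> m (vscale c v) = c * \<phi> m v" using lin_sc by blast
  show ?thesis unfolding f_def by (rule lin_repr[OF a c w])
qed

definition S :: "'a set" where "S = (\<Union>n. supp (b n))"

lemma S_count: "countable S"
  unfolding S_def using bV Lcarrier_finite by (intro countable_UN) (auto intro: countable_finite)

lemma S_X: "S \<subseteq> topspace X"
proof
  fix x assume "x \<in> S"
  then obtain n where "b n x \<noteq> 0" unfolding S_def by blast
  thus "x \<in> topspace X" using Lcarrier_supp[OF bV[of n]] by blast
qed

lemma diag: "\<exists>\<sigma>. strict_mono \<sigma> \<and> (\<forall>s\<in>S. convergent (\<lambda>k. f (\<sigma> k) s))"
proof -
  define P where "P = (\<lambda>(n::nat) (r::nat\<Rightarrow>nat). from_nat_into S n \<in> S \<longrightarrow> convergent (\<lambda>k. f (r k) (from_nat_into S n)))"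
  interpret subseqs P
  proof
    fix n and s :: "nat \<Rightarrow> nat" assume "strict_mono s"
    show "\<exists>r'. strict_mono r' \<and> P n (s \<circ> r')"
    proof (cases "from_nat_into S n \<in> S")
      case False thus ?thesis unfolding P_def by (auto intro: strict_mono_id)
    next
      case True
      let ?z = "from_nat_into S n"
      have zX: "?z \<in> topspace X" using True S_X by blast
      have "bounded (range (\<lambda>k. f (s k) ?z))"
        unfolding bounded_iff using f_bnd[OF zX] by (auto simp: real_norm_def)
      then obtain l r where r: "strict_mono r" "((\<lambda>k. f (s k) ?z) \<circ> r) \<longlonglongrightarrow> l"
        using bounded_imp_convergent_subsequence by blast
      hence "convergent (\<lambda>k. f ((s \<circ> r) k) ?z)" unfolding convergent_def by (auto simp: o_def)
      thus ?thesis using r(1) unfolding P_def by blast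
    qed
  qed
  have "convergent (\<lambda>k. f (diagseq k) s)" if s: "s \<in> S" for s
  proof -
    define n where "n = to_nat_on S s"
    have zs: "from_nat_into S n = s" unfolding n_def using S_count s by simp
    have "P n (diagseq \<circ> ((+) (Suc n)))"
    proof (rule diagseq_holds)
      fix r s' n' assume "strict_mono (r::nat\<Rightarrow>nat)" "P n' s'"
      thus "P n' (s' \<circ> r)" unfolding P_def convergent_def
        using LIMSEQ_subseq_LIMSEQ by (fastforce simp: o_def)
    qed
    hence "convergent (\<lambda>k. f (diagseq (Suc n + k)) s)" using zs s unfolding P_def by (simp add: o_def)
    then obtain l where "(\<lambda>k. f (diagseq (k + Suc n)) s) \<longlonglongrightarrow> l" unfolding convergent_def by (auto simp: add.commute)
    hence "(\<lambda>k. f (diagseq k) s) \<longlonglongrightarrow> l" by (rule LIMSEQ_offset)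
    thus ?thesis unfolding convergent_def by blast
  qed
  thus ?thesis using subseq_diagseq by blast
qed

end




definition clip :: "real \<Rightarrow> real \<Rightarrow> real" where "clip t z = max (-t) (min t z)"
definition Wc :: "real \<Rightarrow> real \<Rightarrow> real" where "Wc t z = z - clip t z"

lemma clip_abs: "t \<ge> 0 \<Longrightarrow> \<bar>clip t z\<bar> \<le> t" unfolding clip_def by auto
lemma clip_lip: "\<bar>clip t a - clip t b\<bar> \<le> \<bar>a - b\<bar>" unfolding clip_def by auto
lemma clip_lip2: "t \<ge> 0 \<Longrightarrow> \<bar>clip t a - clip t b\<bar> \<le> 2 * t" unfolding clip_def by auto
lemma Wc_lip: "\<bar>Wc t a - Wc t b\<bar> \<le> \<bar>a - b\<bar>" unfolding Wc_def clip_def by auto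
lemma Wc_abs: "t \<ge> 0 \<Longrightarrow> \<bar>Wc t z\<bar> \<le> \<bar>z\<bar>" unfolding Wc_def clip_def by auto
lemma Wc_zero: "\<bar>z\<bar> \<le> t \<Longrightarrow> Wc t z = 0" unfolding Wc_def clip_def by auto

lemma min_sqrt: assumes "0 \<le> d" "0 < t" shows "min (2*d) (2*t) \<le> 2 * sqrt t * sqrt d"
proof (cases "d \<le> t")
  case True
  have "sqrt d \<le> sqrt t" using True by simp
  hence "sqrt d * sqrt d \<le> sqrt t * sqrt d" using assms by (intro mult_right_mono) auto
  moreover have "sqrt d * sqrt d = d" using assms(1) by simp
  ultimately have "d \<le> sqrt t * sqrt d" by simp
  thus ?thesis by simp
next
  case False
  have "sqrt t \<le> sqrt d" using False by simp
  hence "sqrt t * sqrt t \<le> sqrt t * sqrt d" using assms by (intro mult_left_mono) auto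
  moreover have "sqrt t * sqrt t = t" using assms(2) by simp
  ultimately have "t \<le> sqrt t * sqrt d" by simp
  thus ?thesis by simp
qed

lemma minmax_lip: "\<bar>min 1 a - min 1 (b::real)\<bar> \<le> \<bar>a - b\<bar>" by auto
lemma max0_lip: "k \<ge> 0 \<Longrightarrow> \<bar>max 0 (1 - k * a) - max 0 (1 - k * b)\<bar> \<le> k * \<bar>a - (b::real)\<bar>"
proof -
  assume k: "k \<ge> 0"
  have e: "(1 - k*a) - (1 - k*b) = k * (b - a)" by (simp add: algebra_simps)
  have "\<bar>(1 - k*a) - (1 - k*b)\<bar> = k * \<bar>a - b\<bar>" unfolding e using k by (simp add: abs_mult abs_minus_commute)
  moreover have "\<bar>max 0 u - max 0 v\<bar> \<le> \<bar>u - v\<bar>" for u v :: real by auto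
  ultimately show ?thesis by metis
qed




locale bad = core +
  fixes \<sigma> :: "nat \<Rightarrow> nat" and kk kk' nn :: "nat \<Rightarrow> nat" and \<eta> :: real
  assumes \<sigma>conv: "\<And>s. s \<in> S \<Longrightarrow> convergent (\<lambda>k. f (\<sigma> k) s)"
    and \<eta>pos: "\<eta> > 0"
    and kk: "\<And>j. kk j \<ge> j" and kk': "\<And>j. kk' j \<ge> j"
    and big: "\<And>j. \<eta> \<le> \<bar>\<phi> (\<sigma> (kk j)) (b (nn j)) - \<phi> (\<sigma> (kk' j)) (b (nn j))\<bar>"
begin

definition u :: "nat \<Rightarrow> 'a \<Rightarrow> real" where "u j y = f (\<sigma> (kk j)) y - f (\<sigma> (kk' j)) y"

lemma u_lip: "x \<in> topspace X \<Longrightarrow> y \<in> topspace X \<Longrightarrow> \<bar>u j y - u j x\<bar> \<le> 2 * D x y"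
proof -
  assume x: "x \<in> topspace X" and y: "y \<in> topspace X"
  have "\<bar>f (\<sigma> (kk j)) y - f (\<sigma> (kk j)) x\<bar> \<le> D x y" "\<bar>f (\<sigma> (kk' j)) y - f (\<sigma> (kk' j)) x\<bar> \<le> D x y"
    using f_lip[OF x y] by blast+
  thus ?thesis unfolding u_def by linarith
qed

lemma u_conv: "s \<in> S \<Longrightarrow> e > 0 \<Longrightarrow> \<exists>N. \<forall>j\<ge>N. \<bar>u j s\<bar> < e"
proof -
  assume s: "s \<in> S" and e: "e > 0"
  have "Cauchy (\<lambda>k. f (\<sigma> k) s)" using \<sigma>conv[OF s] by (rule convergent_Cauchy)
  then obtain M where M: "\<forall>m\<ge>M. \<forall>n\<ge>M. norm (f (\<sigma> m) s - f (\<sigma> n) s) < e"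
    using CauchyD e by blast
  have "\<bar>u j s\<bar> < e" if "j \<ge> M" for j
    using M kk[of j] kk'[of j] that unfolding u_def real_norm_def by (meson order_trans)
  thus ?thesis by blast
qed

lemma u_big: "\<eta> \<le> \<bar>ip (u j) (b (nn j))\<bar>"
proof -
  have "ip (u j) (b (nn j)) = \<phi> (\<sigma> (kk j)) (b (nn j)) - \<phi> (\<sigma> (kk' j)) (b (nn j))"
    unfolding u_def ip_diff_fun using phi_ip[OF bV] by simp
  thus ?thesis using big by simp
qed

definition VL :: "('a \<Rightarrow> real) set" where
  "VL = {v. (\<forall>x\<in>topspace X. \<bar>v x\<bar> \<le> 1) \<and> (\<forall>x\<in>topspace X. \<forall>y\<in>topspace X. \<bar>v y - v x\<bar> \<le> sqrt (D x y))}"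

lemma VL_fam: "supfam X VL (\<lambda>_. 1)"
proof
  have "(\<lambda>_. 0) \<in> VL" unfolding VL_def using D_nonneg by simp
  thus "VL \<noteq> {}" by blast
  show "\<And>x v. x \<in> topspace X \<Longrightarrow> v \<in> VL \<Longrightarrow> \<bar>v x\<bar> \<le> 1" unfolding VL_def by blast
qed

lemma VL_adm: "admissible_seminorm X (supsn VL)"
proof (rule supfam.admissible[OF VL_fam])
  fix x e assume x: "x \<in> topspace X" and e: "(e::real) > 0"
  obtain U where U: "openin X U" "x \<in> U" "\<forall>y\<in>U. D x y < e\<^sup>2" using D_near[OF x, of "e\<^sup>2"] e by auto
  have "\<bar>v y - v x\<bar> \<le> e" if y: "y \<in> U" and v: "v \<in> VL" for y v
  proof -
    have yX: "y \<in> topspace X" using U(1) y openin_subset by blast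
    have "\<bar>v y - v x\<bar> \<le> sqrt (D x y)" using v x yX unfolding VL_def by blast
    also have "\<dots> \<le> sqrt (e\<^sup>2)" using U(3) y by (simp only: real_sqrt_le_iff) (meson less_imp_le)
    also have "\<dots> = e" using e by simp
    finally show ?thesis .
  qed
  thus "\<exists>U. openin X U \<and> x \<in> U \<and> (\<forall>y\<in>U. \<forall>v\<in>VL. \<bar>v y - v x\<bar> \<le> e)" using U by blast
qed

definition RL :: real where "RL = (SOME R. \<forall>n. supsn VL (b n) \<le> R)"

lemma RL: "supsn VL (b n) \<le> RL"
  using someI_ex[OF Hb[OF VL_adm]] unfolding RL_def by blast

lemma RL_nn: "0 \<le> RL"
  using supfam.nonneg[OF VL_fam bV, of 0] RL[of 0] by linarith

definition s\<theta> :: real where "s\<theta> = min 1 (\<eta> / (6 * (RL + 1)))"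
definition \<theta> :: real where "\<theta> = s\<theta>\<^sup>2"

lemma s\<theta>_pos: "0 < s\<theta>" unfolding s\<theta>_def using \<eta>pos RL_nn by simp
lemma s\<theta>_le1: "s\<theta> \<le> 1" unfolding s\<theta>_def by simp
lemma \<theta>_pos: "0 < \<theta>" unfolding \<theta>_def using s\<theta>_pos by simp
lemma \<theta>_le: "\<theta> \<le> s\<theta>" unfolding \<theta>_def power2_eq_square using s\<theta>_pos s\<theta>_le1
  by (simp add: mult_left_le)
lemma sqrt\<theta>: "sqrt \<theta> = s\<theta>" unfolding \<theta>_def using s\<theta>_pos by simp

lemma small: "3 * s\<theta> * RL < \<eta> / 2"
proof -
  have "s\<theta> \<le> \<eta> / (6 * (RL + 1))" unfolding s\<theta>_def by simp
  hence "3 * s\<theta> * RL \<le> 3 * (\<eta> / (6 * (RL + 1))) * RL" using RL_nn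
    by (intro mult_right_mono) auto
  also have "\<dots> = (\<eta> / 2) * (RL / (RL + 1))" using RL_nn by (simp add: field_simps)
  also have "\<dots> < (\<eta> / 2) * 1" using RL_nn \<eta>pos by (intro mult_strict_left_mono) auto
  finally show ?thesis by simp
qed

lemma clip_small: "\<bar>ip (\<lambda>y. clip \<theta> (u j y)) (b n)\<bar> \<le> 3 * s\<theta> * RL"
proof -
  define L where "L = 3 * s\<theta>"
  have Lpos: "L > 0" unfolding L_def using s\<theta>_pos by simp
  define v where "v = (\<lambda>y. clip \<theta> (u j y) / L)"
  have vVL: "v \<in> VL" unfolding VL_def
  proof (intro CollectI conjI ballI)
    fix x assume x: "x \<in> topspace X"
    have "\<bar>clip \<theta> (u j x)\<bar> \<le> L" using clip_abs[of \<theta> "u j x"] \<theta>_pos \<theta>_le s\<theta>_pos unfolding L_def by linarith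
    hence "\<bar>clip \<theta> (u j x)\<bar> / L \<le> 1" using Lpos by simp
    thus "\<bar>v x\<bar> \<le> 1" unfolding v_def by (simp add: abs_divide abs_of_pos[OF Lpos])
  next
    fix x y assume x: "x \<in> topspace X" and y: "y \<in> topspace X"
    have d0: "0 \<le> D x y" using D_nonneg[OF x y] .
    have "\<bar>clip \<theta> (u j y) - clip \<theta> (u j x)\<bar> \<le> min (2 * D x y) (2 * \<theta>)"
      using clip_lip[of \<theta> "u j y" "u j x"] clip_lip2[of \<theta> "u j y" "u j x"] u_lip[OF x y, of j] \<theta>_pos by simp
    also have "\<dots> \<le> 2 * sqrt \<theta> * sqrt (D x y)" by (rule min_sqrt[OF d0 \<theta>_pos])
    also have "\<dots> \<le> L * sqrt (D x y)" unfolding L_def sqrt\<theta> using s\<theta>_pos d0 by (intro mult_right_mono) auto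
    finally have "\<bar>clip \<theta> (u j y) - clip \<theta> (u j x)\<bar> \<le> L * sqrt (D x y)" .
    moreover have "v y - v x = (clip \<theta> (u j y) - clip \<theta> (u j x)) / L" unfolding v_def by (simp add: diff_divide_distrib)
    ultimately have "\<bar>v y - v x\<bar> \<le> (L * sqrt (D x y)) / L"
      using Lpos by (simp only: abs_divide abs_of_pos) (rule divide_right_mono, auto)
    thus "\<bar>v y - v x\<bar> \<le> sqrt (D x y)" using Lpos by simp
  qed
  have e: "(\<lambda>y. clip \<theta> (u j y)) = (\<lambda>y. L * v y)" unfolding v_def using Lpos by (intro ext) simp
  have "\<bar>ip (\<lambda>y. clip \<theta> (u j y)) (b n)\<bar> = L * \<bar>ip v (b n)\<bar>" unfolding e ip_mult_fun using Lpos by (simp add: abs_mult)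
  also have "\<dots> \<le> L * RL" using supfam.upper[OF VL_fam bV vVL, of n] RL[of n] Lpos by (intro mult_left_mono) auto
  finally show ?thesis unfolding L_def .
qed

lemma W_big: "\<eta> / 2 < \<bar>ip (\<lambda>y. Wc \<theta> (u j y)) (b (nn j))\<bar>"
proof -
  have "ip (\<lambda>y. Wc \<theta> (u j y)) (b (nn j)) = ip (u j) (b (nn j)) - ip (\<lambda>y. clip \<theta> (u j y)) (b (nn j))"
    unfolding Wc_def by (rule ip_diff_fun)
  thus ?thesis using u_big[of j] clip_small[of j "nn j"] small by linarith
qed

end




context bad begin

definition \<kappa> :: real where "\<kappa> = 16 / \<theta>"
definition T :: "nat \<Rightarrow> 'a set" where "T j = supp (b (nn j))"
definition lam :: "nat \<Rightarrow> 'a \<Rightarrow> real" where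
  "lam j y = min 1 (\<Sum>t\<in>T j. max 0 (1 - \<kappa> * D t y))"
definition \<psi> :: "nat \<Rightarrow> 'a \<Rightarrow> real" where "\<psi> j y = Wc \<theta> (u j y) * lam j y"

lemma \<kappa>_pos: "\<kappa> > 0" unfolding \<kappa>_def using \<theta>_pos by simp
lemma T_fin: "finite (T j)" unfolding T_def using Lcarrier_finite[OF bV] .
lemma T_S: "T j \<subseteq> S" unfolding T_def S_def by blast
lemma T_X: "T j \<subseteq> topspace X" using T_S S_X by blast

lemma lam_T: "t \<in> T j \<Longrightarrow> lam j t = 1"
proof -
  assume t: "t \<in> T j"
  have "max 0 (1 - \<kappa> * D t t) \<le> (\<Sum>t'\<in>T j. max 0 (1 - \<kappa> * D t' t))"
    by (rule member_le_sum[OF t _ T_fin]) simp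
  hence "1 \<le> (\<Sum>t'\<in>T j. max 0 (1 - \<kappa> * D t' t))" by (simp add: D_refl)
  thus ?thesis unfolding lam_def by simp
qed

lemma lam_nn: "0 \<le> lam j y" unfolding lam_def by (simp add: sum_nonneg)
lemma lam_le1: "lam j y \<le> 1" unfolding lam_def by simp

lemma psi_T: "ip (\<psi> j) (b (nn j)) = ip (\<lambda>y. Wc \<theta> (u j y)) (b (nn j))"
  by (rule ip_cong) (simp add: \<psi>_def lam_T T_def)

lemma D_diff: "x \<in> topspace X \<Longrightarrow> y \<in> topspace X \<Longrightarrow> t \<in> topspace X \<Longrightarrow> \<bar>D t y - D t x\<bar> \<le> D x y"
proof -
  assume x: "x \<in> topspace X" and y: "y \<in> topspace X" and t: "t \<in> topspace X"
  have "D t y \<le> D t x + D x y" using D_tri[OF t x y] .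
  moreover have "D t x \<le> D t y + D y x" using D_tri[OF t y x] .
  moreover have "D y x = D x y" using D_sym[OF y x] .
  ultimately show ?thesis by linarith
qed

lemma lam_lip: "x \<in> topspace X \<Longrightarrow> y \<in> topspace X \<Longrightarrow> \<bar>lam j y - lam j x\<bar> \<le> \<kappa> * real (card (T j)) * D x y"
proof -
  assume x: "x \<in> topspace X" and y: "y \<in> topspace X"
  let ?g = "\<lambda>t z. max 0 (1 - \<kappa> * D t z)"
  have "\<bar>lam j y - lam j x\<bar> \<le> \<bar>(\<Sum>t\<in>T j. ?g t y) - (\<Sum>t\<in>T j. ?g t x)\<bar>"
    unfolding lam_def by (rule minmax_lip)
  also have "\<dots> = \<bar>\<Sum>t\<in>T j. ?g t y - ?g t x\<bar>" by (simp add: sum_subtractf)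
  also have "\<dots> \<le> (\<Sum>t\<in>T j. \<bar>?g t y - ?g t x\<bar>)" by (rule sum_abs)
  also have "\<dots> \<le> (\<Sum>t\<in>T j. \<kappa> * D x y)"
  proof (rule sum_mono)
    fix t assume "t \<in> T j"
    hence tX: "t \<in> topspace X" using T_X by blast
    have "\<bar>?g t y - ?g t x\<bar> \<le> \<kappa> * \<bar>D t y - D t x\<bar>" using max0_lip \<kappa>_pos by simp
    also have "\<dots> \<le> \<kappa> * D x y" using D_diff[OF x y tX] \<kappa>_pos by (intro mult_left_mono) auto
    finally show "\<bar>?g t y - ?g t x\<bar> \<le> \<kappa> * D x y" .
  qed
  also have "\<dots> = \<kappa> * real (card (T j)) * D x y" by simp
  finally show ?thesis .
qed

lemma psi_lip: "x \<in> topspace X \<Longrightarrow> y \<in> topspace X \<Longrightarrow>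
   \<bar>\<psi> j y - \<psi> j x\<bar> \<le> (2 + \<bar>u j x\<bar> * \<kappa> * real (card (T j))) * D x y"
proof -
  assume x: "x \<in> topspace X" and y: "y \<in> topspace X"
  have e: "\<psi> j y - \<psi> j x = (Wc \<theta> (u j y) - Wc \<theta> (u j x)) * lam j y + Wc \<theta> (u j x) * (lam j y - lam j x)"
    unfolding \<psi>_def by (simp add: algebra_simps)
  have a: "\<bar>(Wc \<theta> (u j y) - Wc \<theta> (u j x)) * lam j y\<bar> \<le> 2 * D x y"
  proof -
    have "\<bar>(Wc \<theta> (u j y) - Wc \<theta> (u j x)) * lam j y\<bar> = \<bar>Wc \<theta> (u j y) - Wc \<theta> (u j x)\<bar> * lam j y"
      using lam_nn by (simp add: abs_mult)
    also have "\<dots> \<le> \<bar>Wc \<theta> (u j y) - Wc \<theta> (u j x)\<bar> * 1" using lam_le1 by (intro mult_left_mono) auto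
    also have "\<dots> \<le> 2 * D x y" using Wc_lip[of \<theta> "u j y" "u j x"] u_lip[OF x y, of j] by simp
    finally show ?thesis .
  qed
  have b: "\<bar>Wc \<theta> (u j x) * (lam j y - lam j x)\<bar> \<le> \<bar>u j x\<bar> * (\<kappa> * real (card (T j)) * D x y)"
    unfolding abs_mult using Wc_abs[of \<theta> "u j x"] \<theta>_pos lam_lip[OF x y, of j]
    by (intro mult_mono) auto
  have "\<bar>\<psi> j y - \<psi> j x\<bar> \<le> 2 * D x y + \<bar>u j x\<bar> * (\<kappa> * real (card (T j)) * D x y)"
    unfolding e using a b abs_triangle_ineq order_trans add_mono by fastforce
  thus ?thesis by (simp add: algebra_simps)
qed

lemma LF: "x \<in> topspace X \<Longrightarrow> \<exists>U N. openin X U \<and> x \<in> U \<and> (\<forall>j\<ge>N. \<forall>y\<in>U. \<psi> j y = 0)"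
proof -
  assume x: "x \<in> topspace X"
  obtain U where U: "openin X U" "x \<in> U" "\<forall>y\<in>U. D x y < \<theta>/16"
    using D_near[OF x, of "\<theta>/16"] \<theta>_pos by auto
  have UX: "\<And>y. y \<in> U \<Longrightarrow> y \<in> topspace X" using U(1) openin_subset by blast
  show ?thesis
  proof (cases "\<exists>s\<in>S. D s x < \<theta>/8")
    case True
    then obtain s where s: "s \<in> S" "D s x < \<theta>/8" by blast
    have sX: "s \<in> topspace X" using s S_X by blast
    obtain N where N: "\<forall>j\<ge>N. \<bar>u j s\<bar> < \<theta>/4" using u_conv[OF s(1), of "\<theta>/4"] \<theta>_pos by auto
    have "\<psi> j y = 0" if j: "j \<ge> N" and y: "y \<in> U" for j y
    proof -
      have yX: "y \<in> topspace X" using UX y .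
      have "D s y \<le> D s x + D x y" using D_tri[OF sX x yX] .
      moreover have "D x y < \<theta>/16" using U(3) y by blast
      ultimately have Dsy: "D s y < \<theta>/8 + \<theta>/16" using s(2) by linarith
      have "\<bar>u j y - u j s\<bar> \<le> 2 * D s y" using u_lip[OF sX yX] .
      moreover have "\<bar>u j s\<bar> < \<theta>/4" using N j by blast
      ultimately have "\<bar>u j y\<bar> \<le> \<theta>" using Dsy by linarith
      thus ?thesis unfolding \<psi>_def using Wc_zero by simp
    qed
    thus ?thesis using U by blast
  next
    case False
    have "\<psi> j y = 0" if y: "y \<in> U" for j y
    proof -
      have yX: "y \<in> topspace X" using UX y .
      have "max 0 (1 - \<kappa> * D t y) = 0" if t: "t \<in> T j" for t
      proof -
        have tS: "t \<in> S" and tX: "t \<in> topspace X" using t T_S T_X by blast+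
        have "D t x \<le> D t y + D y x" using D_tri[OF tX yX x] .
        moreover have "D y x = D x y" using D_sym[OF yX x] .
        moreover have "\<theta>/8 \<le> D t x" using False tS by force
        moreover have "D x y < \<theta>/16" using U(3) y by blast
        ultimately have "\<theta>/16 \<le> D t y" by linarith
        hence "1 \<le> \<kappa> * D t y" unfolding \<kappa>_def using \<theta>_pos by (simp add: field_simps)
        thus ?thesis by simp
      qed
      hence "lam j y = 0" unfolding lam_def by simp
      thus ?thesis unfolding \<psi>_def by simp
    qed
    thus ?thesis using U by blast
  qed
qed

definition VS :: "('a \<Rightarrow> real) set" where "VS = range (\<lambda>j y. real j * \<psi> j y)"

lemma VS_bnd: "x \<in> topspace X \<Longrightarrow> \<exists>c. \<forall>v\<in>VS. \<bar>v x\<bar> \<le> c"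
proof -
  assume x: "x \<in> topspace X"
  obtain U N where U: "openin X U" "x \<in> U" "\<forall>j\<ge>N. \<forall>y\<in>U. \<psi> j y = 0" using LF[OF x] by blast
  have "\<bar>real j * \<psi> j x\<bar> \<le> (\<Sum>i<N. \<bar>real i * \<psi> i x\<bar>)" for j
  proof (cases "j < N")
    case True thus ?thesis by (intro member_le_sum) auto
  next
    case False thus ?thesis using U by (simp add: sum_nonneg)
  qed
  thus ?thesis unfolding VS_def by blast
qed

lemma VS_eq: "x \<in> topspace X \<Longrightarrow> e > 0 \<Longrightarrow> \<exists>U. openin X U \<and> x \<in> U \<and> (\<forall>y\<in>U. \<forall>v\<in>VS. \<bar>v y - v x\<bar> \<le> e)"
proof -
  assume x: "x \<in> topspace X" and e: "e > 0"
  obtain U1 N where U1: "openin X U1" "x \<in> U1" "\<forall>j\<ge>N. \<forall>y\<in>U1. \<psi> j y = 0" using LF[OF x] by blast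
  define K where "K = (\<Sum>i<N. real i * (2 + \<bar>u i x\<bar> * \<kappa> * real (card (T i))))"
  have K0: "0 \<le> K" unfolding K_def using \<kappa>_pos by (intro sum_nonneg) simp
  obtain U2 where U2: "openin X U2" "x \<in> U2" "\<forall>y\<in>U2. D x y < e / (K + 1)"
    using D_near[OF x, of "e/(K+1)"] e K0 by auto
  have "\<bar>real j * \<psi> j y - real j * \<psi> j x\<bar> \<le> e" if y: "y \<in> U1 \<inter> U2" for j y
  proof (cases "j < N")
    case False thus ?thesis using U1 y e by simp
  next
    case True
    have yX: "y \<in> topspace X" using U1(1) y openin_subset by blast
    have d0: "0 \<le> D x y" using D_nonneg[OF x yX] .
    have "\<bar>real j * \<psi> j y - real j * \<psi> j x\<bar> = real j * \<bar>\<psi> j y - \<psi> j x\<bar>"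
      by (simp add: abs_mult right_diff_distrib[symmetric])
    also have "\<dots> \<le> real j * ((2 + \<bar>u j x\<bar> * \<kappa> * real (card (T j))) * D x y)"
      using psi_lip[OF x yX, of j] by (intro mult_left_mono) auto
    also have "\<dots> = (real j * (2 + \<bar>u j x\<bar> * \<kappa> * real (card (T j)))) * D x y" by simp
    also have "\<dots> \<le> K * D x y"
      unfolding K_def using True d0 \<kappa>_pos
      by (intro mult_right_mono member_le_sum[of j "{..<N}" "\<lambda>i. real i * (2 + \<bar>u i x\<bar> * \<kappa> * real (card (T i)))"]) auto
    also have "\<dots> \<le> K * (e / (K+1))" using U2(3) y K0 by (intro mult_left_mono) auto
    also have "\<dots> \<le> e" using K0 e by (simp add: field_simps)
    finally show ?thesis .
  qed
  thus ?thesis unfolding VS_def using U1 U2 by (intro exI[of _ "U1 \<inter> U2"]) (auto intro: openin_Int)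
qed

lemma contradiction: False
proof -
  obtain C where C: "\<forall>x\<in>topspace X. \<forall>v\<in>VS. \<bar>v x\<bar> \<le> C x" using VS_bnd by metis
  interpret VSf: supfam X VS C
  proof
    show "VS \<noteq> {}" unfolding VS_def by blast
    show "\<And>x v. x \<in> topspace X \<Longrightarrow> v \<in> VS \<Longrightarrow> \<bar>v x\<bar> \<le> C x" using C by blast
  qed
  have adm: "admissible_seminorm X (supsn VS)" by (rule VSf.admissible[OF VS_eq])
  obtain R where R: "\<forall>n. supsn VS (b n) \<le> R" using Hb[OF adm] by blast
  define j where "j = nat (ceiling (2 * R / \<eta>)) + 1"
  have "2 * R / \<eta> < real j" unfolding j_def by linarith
  hence jR: "R < real j * (\<eta> / 2)" using \<eta>pos by (simp add: field_simps)
  have "real j * (\<eta> / 2) \<le> real j * \<bar>ip (\<psi> j) (b (nn j))\<bar>"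
    using W_big[of j] psi_T[of j] by (intro mult_left_mono) auto
  also have "\<dots> = \<bar>ip (\<lambda>y. real j * \<psi> j y) (b (nn j))\<bar>" by (simp add: ip_mult_fun abs_mult)
  also have "\<dots> \<le> supsn VS (b (nn j))" using VSf.upper[OF bV] unfolding VS_def by blast
  also have "\<dots> \<le> R" using R by blast
  finally show False using jR by linarith
qed

end




context core begin

lemma UC:
  assumes "\<And>s. s \<in> S \<Longrightarrow> convergent (\<lambda>k. f (\<sigma> k) s)"
  shows "\<forall>\<eta>>0. \<exists>K. \<forall>k\<ge>K. \<forall>k'\<ge>K. \<forall>n. \<bar>\<phi> (\<sigma> k) (b n) - \<phi> (\<sigma> k') (b n)\<bar> < \<eta>"
proof (rule ccontr)
  assume "\<not> ?thesis"
  then obtain \<eta> where \<eta>: "\<eta> > 0" "\<forall>K. \<exists>k\<ge>K. \<exists>k'\<ge>K. \<exists>n. \<eta> \<le> \<bar>\<phi> (\<sigma> k) (b n) - \<phi> (\<sigma> k') (b n)\<bar>"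
    by (auto simp: not_less)
  then obtain kk kk' nn where kk: "\<forall>j. kk j \<ge> j \<and> kk' j \<ge> j \<and> \<eta> \<le> \<bar>\<phi> (\<sigma> (kk j)) (b (nn j)) - \<phi> (\<sigma> (kk' j)) (b (nn j))\<bar>"
    by metis
  interpret bad X q \<phi> b \<sigma> kk kk' nn \<eta>
    by unfold_locales (use assms \<eta> kk in auto)
  show False by (rule contradiction)
qed

lemma DLP_core:
  assumes la: "\<And>n. (\<lambda>m. \<phi> m (b n)) \<longlonglongrightarrow> a n" and lA: "a \<longlonglongrightarrow> A"
    and lc: "\<And>m. (\<lambda>n. \<phi> m (b n)) \<longlonglongrightarrow> c m" and lC: "c \<longlonglongrightarrow> C"
  shows "A = C"
proof -
  obtain \<sigma> where \<sigma>: "strict_mono \<sigma>" "\<forall>s\<in>S. convergent (\<lambda>k. f (\<sigma> k) s)" using diag by blast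
  have uc: "\<forall>\<eta>>0. \<exists>K. \<forall>k\<ge>K. \<forall>k'\<ge>K. \<forall>n. \<bar>\<phi> (\<sigma> k) (b n) - \<phi> (\<sigma> k') (b n)\<bar> < \<eta>"
    by (rule UC) (use \<sigma> in blast)
  have main: "\<bar>C - A\<bar> \<le> \<epsilon>" if e: "\<epsilon> > 0" for \<epsilon>
  proof -
    obtain K where K: "\<forall>k\<ge>K. \<forall>k'\<ge>K. \<forall>n. \<bar>\<phi> (\<sigma> k) (b n) - \<phi> (\<sigma> k') (b n)\<bar> < \<epsilon>" using uc e by blast
    have 1: "\<bar>\<phi> (\<sigma> k) (b n) - a n\<bar> \<le> \<epsilon>" if k: "k \<ge> K" for k n
    proof -
      have "(\<lambda>k'. \<phi> (\<sigma> k') (b n)) \<longlonglongrightarrow> a n"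
        using LIMSEQ_subseq_LIMSEQ[OF la \<sigma>(1)] by (simp add: o_def)
      hence "(\<lambda>k'. \<bar>\<phi> (\<sigma> k) (b n) - \<phi> (\<sigma> k') (b n)\<bar>) \<longlonglongrightarrow> \<bar>\<phi> (\<sigma> k) (b n) - a n\<bar>"
        by (intro tendsto_intros)
      moreover have "\<forall>k'\<ge>K. \<bar>\<phi> (\<sigma> k) (b n) - \<phi> (\<sigma> k') (b n)\<bar> \<le> \<epsilon>" using K k by (meson less_imp_le)
      ultimately show ?thesis by (rule Lim_bounded)
    qed
    have 2: "\<bar>c (\<sigma> k) - A\<bar> \<le> \<epsilon>" if k: "k \<ge> K" for k
    proof -
      have "(\<lambda>n. \<bar>\<phi> (\<sigma> k) (b n) - a n\<bar>) \<longlonglongrightarrow> \<bar>c (\<sigma> k) - A\<bar>"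
        using lc[of "\<sigma> k"] lA by (intro tendsto_intros)
      moreover have "\<forall>n\<ge>0. \<bar>\<phi> (\<sigma> k) (b n) - a n\<bar> \<le> \<epsilon>" using 1 k by blast
      ultimately show ?thesis by (rule Lim_bounded)
    qed
    have "(\<lambda>k. c (\<sigma> k)) \<longlonglongrightarrow> C" using LIMSEQ_subseq_LIMSEQ[OF lC \<sigma>(1)] by (simp add: o_def)
    hence "(\<lambda>k. \<bar>c (\<sigma> k) - A\<bar>) \<longlonglongrightarrow> \<bar>C - A\<bar>" by (intro tendsto_intros)
    moreover have "\<forall>k\<ge>K. \<bar>c (\<sigma> k) - A\<bar> \<le> \<epsilon>" using 2 by blast
    ultimately show ?thesis by (rule Lim_bounded)
  qed
  show ?thesis
  proof (rule ccontr)
    assume "A \<noteq> C"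
    hence "\<bar>C - A\<bar> > 0" by simp
    hence "\<bar>C - A\<bar> \<le> \<bar>C - A\<bar> / 2" using main[of "\<bar>C - A\<bar> / 2"] by simp
    thus False using \<open>\<bar>C - A\<bar> > 0\<close> by simp
  qed
qed

end

theorem theorem7p6:
  fixes X :: "'a topology"
  assumes "Tychonoff_space X"
  shows "DLP_space (Ltop X)"
  unfolding DLP_space_def
proof (intro allI impI)
  fix B M assume H: "bounded_in (Ltop X) B \<and> M \<subseteq> cdual (Ltop X) \<and> equicontinuous_on (Ltop X) M \<and>
        compactin (weak_star_top (Ltop X)) M"
  hence bB: "bounded_in (Ltop X) B" and MD: "M \<subseteq> cdual (Ltop X)" and eqM: "equicontinuous_on (Ltop X) M"
    by blast+
  obtain q where q: "admissible_seminorm X q" "\<forall>\<phi>\<in>M. \<forall>w\<in>Lcarrier X. \<bar>\<phi> w\<bar> \<le> q w"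
    using equicont_dom[OF MD eqM] by blast
  have BV: "B \<subseteq> Lcarrier X" using bB unfolding bounded_in_def topspace_Ltop by blast
  show "DLP_family ((\<lambda>b. \<lambda>\<phi>. \<phi> b) ` B) M"
    unfolding DLP_family_def
  proof (intro allI impI)
    fix fs :: "nat \<Rightarrow> (('a \<Rightarrow> real) \<Rightarrow> real) \<Rightarrow> real" and xs :: "nat \<Rightarrow> ('a \<Rightarrow> real) \<Rightarrow> real"
      and a :: "nat \<Rightarrow> real" and A and c :: "nat \<Rightarrow> real" and C
    assume L: "(\<forall>n. fs n \<in> (\<lambda>b. \<lambda>\<phi>. \<phi> b) ` B) \<and> (\<forall>m. xs m \<in> M) \<and>
        (\<forall>n. (\<lambda>m. fs n (xs m)) \<longlonglongrightarrow> a n) \<and> a \<longlonglongrightarrow> A \<and>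
        (\<forall>m. (\<lambda>n. fs n (xs m)) \<longlonglongrightarrow> c m) \<and> c \<longlonglongrightarrow> C"
    obtain b where b: "\<forall>n. b n \<in> B \<and> fs n = (\<lambda>\<phi>. \<phi> (b n))" using L by (simp add: image_iff) metis
    have xsD: "\<And>m. xs m \<in> cdual (Ltop X)" using L MD by blast
    interpret core X q xs b
    proof
      show "admissible_seminorm X q" by (rule q(1))
      show "\<And>m v w. v \<in> Lcarrier X \<Longrightarrow> w \<in> Lcarrier X \<Longrightarrow> xs m (vadd v w) = xs m v + xs m w"
        using cdual_lin(1)[OF xsD] by blast
      show "\<And>m c v. v \<in> Lcarrier X \<Longrightarrow> xs m (vscale c v) = c * xs m v"
        using cdual_lin(2)[OF xsD] by blast
      show "\<And>m w. w \<in> Lcarrier X \<Longrightarrow> \<bar>xs m w\<bar> \<le> q w" using q(2) L by blast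
      show "\<And>n. b n \<in> Lcarrier X" using b BV by blast
      show "\<And>p. admissible_seminorm X p \<Longrightarrow> \<exists>R. \<forall>n. p (b n) \<le> R"
      proof -
        fix p assume "admissible_seminorm X p"
        then obtain R where "\<forall>b\<in>B. p b \<le> R" using bounded_sn[OF bB] by blast
        thus "\<exists>R. \<forall>n. p (b n) \<le> R" using b by blast
      qed
    qed
    have e: "\<And>n m. fs n (xs m) = xs m (b n)" using b by simp
    show "A = C"
      by (rule DLP_core[of a A c C]) (use L in \<open>simp_all add: e\<close>)
  qed
qed


end
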